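(* The following two statements are equivalent. (i) For every amphicheiral knot $K$, with Conway polynomial $C(z)$, there is $F\in\mathbb Z_4[z^2]$ with $F^2=C(z)\,C(z^2)\,C(iz)$ in $\mathbb Z_4[z^2]$. (ii) For every amphicheiral knot $K$ and every $i\ge 1$, $pc_{4i}(K)\equiv 0\pmod 2$.
   Context: A knot is amphicheiral if it is isotopic to its mirror image, disregarding string orientation. The Conway polynomial $C(z)$ of a knot lies in $1+z^2\mathbb Z[z^2]$. Define $\exp_{\mathbb Z}\colon x\mathbb Z[[x]]\to 1+x\mathbb Z[[x]]$ by $\exp_{\mathbb Z}\big(\sum_{i\ge1} b_i x^i\big)=\prod_{i\ge 1}(1+(-x)^i)^{b_i}$; it is a bijection taking addition to multiplication, and $\log_{\mathbb Z}$ denotes its inverse. Regarding $C$ as a power series in the variable $x=z^2$, write $\log_{\mathbb Z}(C)=\sum_{i\ge1} pc_{2i}\, z^{2i}$; the integers $pc_{2i}=pc_{2i}(K)$ are knot invariants. The product $C(z)C(z^2)C(iz)$ lies in $\mathbb Z[z^2]$ and is reduced modulo $4$. *)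

theory Defs
  imports "HOL-Computational_Algebra.Polynomial" "HOL-Library.Numeral_Type"
begin

definition conway_type :: "int poly \<Rightarrow> bool" where
  "conway_type C \<longleftrightarrow> coeff C 0 = 1 \<and> (\<forall>n. odd n \<longrightarrow> coeff C n = 0)"

definition conway_sq :: "int poly \<Rightarrow> int poly" where
  "conway_sq C = pcompose C [:0, 0, 1:]"

text \<open>C(iz) for an even polynomial C: the coefficient of z^(2k) is multiplied by i^(2k) = (-1)^k.\<close>
definition conway_iz :: "int poly \<Rightarrow> int poly" where
  "conway_iz C = (\<Sum>n\<le>degree C. monom ((if even n then (-1) ^ (n div 2) else 0) * coeff C n) n)"

text \<open>The polynomial C regarded as a polynomial in x = z^2.\<close>
definition conway_x :: "int poly \<Rightarrow> int poly" where
  "conway_x C = (\<Sum>n\<le>degree C. monom (coeff C (2 * n)) n)"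

text \<open>exp_Z truncated: positive and negative parts of prod_{i=1..N} (1+(-x)^i)^(b i).\<close>
definition expZ_pos :: "(nat \<Rightarrow> int) \<Rightarrow> nat \<Rightarrow> int poly" where
  "expZ_pos b N = (\<Prod>i\<in>{1..N}. (1 + (- [:0, 1:]) ^ i) ^ nat (b i))"

definition expZ_neg :: "(nat \<Rightarrow> int) \<Rightarrow> nat \<Rightarrow> int poly" where
  "expZ_neg b N = (\<Prod>i\<in>{1..N}. (1 + (- [:0, 1:]) ^ i) ^ nat (- b i))"

text \<open>b is log_Z(c), i.e. exp_Z(sum b_i x^i) = c as power series in x:
  for every N, c * (negative part) agrees with (positive part) up to x^N
  (factors with i > N do not affect coefficients up to x^N).\<close>
definition is_logZ :: "int poly \<Rightarrow> (nat \<Rightarrow> int) \<Rightarrow> bool" where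
  "is_logZ c b \<longleftrightarrow> b 0 = 0 \<and>
     (\<forall>N k. k \<le> N \<longrightarrow> coeff (c * expZ_neg b N) k = coeff (expZ_pos b N) k)"

definition logZ :: "int poly \<Rightarrow> nat \<Rightarrow> int" where
  "logZ c = (THE b. is_logZ c b)"

text \<open>pc_{2i}(C) = the coefficient of z^{2i} in log_Z(C) = coefficient of x^i.\<close>
definition pc :: "int poly \<Rightarrow> nat \<Rightarrow> int" where
  "pc C m = (if even m then logZ (conway_x C) (m div 2) else 0)"

definition mod4 :: "int poly \<Rightarrow> 4 poly" where
  "mod4 p = map_poly of_int p"

end

theory Submission
  imports Defs
begin

lemma coeff_x2_mult: "coeff ([:0,0,1:] * r) n = (if n < 2 then 0 else coeff r (n - 2))"
  for r :: "'a::comm_ring_1 poly"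
  by (cases n; cases "n - 1") (auto simp: coeff_pCons')

lemma coeff_pcomp_x2:
  "coeff (pcompose p [:0,0,1:]) n = (if even n then coeff p (n div 2) else (0::'a::comm_ring_1))"
proof (induction p arbitrary: n)
  case (pCons a p)
  show ?case
  proof (cases "n < 2")
    case True
    then have "n = 0 \<or> n = 1" by auto
    then show ?thesis by (auto simp: pcompose_pCons coeff_x2_mult)
  next
    case False
    then obtain m where m: "n = Suc (Suc m)" by (metis add_2_eq_Suc le_add_diff_inverse not_less)
    show ?thesis using pCons.IH[of m] by (auto simp: pcompose_pCons coeff_x2_mult m)
  qed
qed simp

lemma coeff_pcomp_nx:
  "coeff (pcompose p [:0,-1:]) n = (-1)^n * coeff p n" for p :: "'a::comm_ring_1 poly"
proof (induction p arbitrary: n)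
  case (pCons a p)
  show ?case using pCons.IH[of "n - 1"] by (cases n) (auto simp: pcompose_pCons)
qed simp

definition cgi :: "int \<Rightarrow> nat \<Rightarrow> int poly \<Rightarrow> int poly \<Rightarrow> bool" where
  "cgi m N p q \<longleftrightarrow> (\<forall>k\<le>N. m dvd coeff p k - coeff q k)"

lemma cgi_refl[simp]: "cgi m N p p" by (simp add: cgi_def)
lemma cgi_sym: "cgi m N p q \<Longrightarrow> cgi m N q p"
  unfolding cgi_def by (metis dvd_minus_iff minus_diff_eq)
lemma cgi_trans: "cgi m N p q \<Longrightarrow> cgi m N q r \<Longrightarrow> cgi m N p r"
  unfolding cgi_def by (metis diff_add_cancel dvd_add add_diff_eq diff_diff_eq2)
lemma cgi_mono: "cgi m N p q \<Longrightarrow> m' dvd m \<Longrightarrow> N' \<le> N \<Longrightarrow> cgi m' N' p q"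
  unfolding cgi_def by (meson dvd_trans order_trans)

lemma cgi_intro: "p = q + smult m h + monom 1 (Suc N) * w \<Longrightarrow> cgi m N p q"
  unfolding cgi_def by (auto simp: coeff_monom_mult)

lemma cgi_elim:
  assumes "cgi m N p q"
  obtains h w where "p = q + smult m h + monom 1 (Suc N) * w"
proof -
  define d where "d = p - q"
  define h where "h = (\<Sum>k\<le>N. monom (coeff d k div m) k)"
  have ch: "coeff h k = (if k \<le> N then coeff d k div m else 0)" for k
    unfolding h_def by (auto simp: coeff_sum_monom coeff_sum coeff_monom intro!: sum.neutral)
  have "\<forall>k<Suc N. coeff (d - smult m h) k = 0"
    using assms unfolding cgi_def by (auto simp: ch d_def)
  then obtain w where w: "d - smult m h = monom 1 (Suc N) * w"
    using monom_1_dvd_iff' by (metis dvdE)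
  show ?thesis by (rule that[of h w]) (use w in \<open>simp add: d_def algebra_simps\<close>)
qed

lemma cgi_add: "cgi m N p p' \<Longrightarrow> cgi m N q q' \<Longrightarrow> cgi m N (p + q) (p' + q')"
  unfolding cgi_def by (simp add: dvd_add_left_iff dvd_diff add_diff_add)

lemma cgi_mult1: assumes "cgi m N p p'" shows "cgi m N (p * q) (p' * q)"
proof -
  obtain h w where "p = p' + smult m h + monom 1 (Suc N) * w" using assms cgi_elim by blast
  then have "p * q = p' * q + smult m (h * q) + monom 1 (Suc N) * (w * q)"
    by (simp add: algebra_simps)
  then show ?thesis by (rule cgi_intro)
qed

lemma cgi_mult: "cgi m N p p' \<Longrightarrow> cgi m N q q' \<Longrightarrow> cgi m N (p * q) (p' * q')"
  by (metis cgi_mult1 cgi_trans mult.commute)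

lemma cgi_power: "cgi m N p p' \<Longrightarrow> cgi m N (p ^ k) (p' ^ k)"
  by (induction k) (auto intro: cgi_mult)

lemma cgi_prod: "(\<And>i. i \<in> A \<Longrightarrow> cgi m N (f i) (g i)) \<Longrightarrow> cgi m N (prod f A) (prod g A)"
  by (induction A rule: infinite_finite_induct) (auto intro: cgi_mult)

lemma cgi_x2: "cgi m N p q \<Longrightarrow> cgi m N (pcompose p [:0,0,1:]) (pcompose q [:0,0,1:])"
  unfolding cgi_def by (auto simp: coeff_pcomp_x2)

lemma cgi_nx: "cgi m N p q \<Longrightarrow> cgi m N (pcompose p [:0,-1:]) (pcompose q [:0,-1:])"
  unfolding cgi_def by (auto simp: coeff_pcomp_nx right_diff_distrib[symmetric])

lemma X_pow: "[:0,1:] ^ n = (monom 1 n :: 'a::comm_ring_1 poly)"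
  by (simp add: monom_altdef)

lemma pcompose_power: "pcompose (p ^ n) r = (pcompose p r) ^ n"
  by (induction n) (auto simp: pcompose_mult pcompose_1)

lemma mult_numeral_conv_smult: "P * numeral n = smult (numeral n) P"
  by (metis mult.commute numeral_mult_conv_smult)

lemma aux2: "smult a (p * 2) = smult (a * 2) (p :: int poly)"
  by (simp add: mult_numeral_conv_smult mult.commute)

lemma frob: "\<exists>h. f ^ 2 = pcompose f [:0,0,1:] + smult 2 (h :: int poly)"
proof (induction f)
  case 0
  then show ?case by (intro exI[of _ 0]) simp
next
  case (pCons a p)
  then obtain h where h: "p ^ 2 = pcompose p [:0,0,1:] + smult 2 h" by blast
  have e: "a * a - a = 2 * ((a * a - a) div 2)" by simp
  have f: "pCons a p = [:a:] + [:0,1:] * p" by simp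
  have g: "[:0,0,1:] = [:0,1:] * ([:0,1:] :: int poly)" by simp
  define h' where "h' = [:(a * a - a) div 2:] + smult a ([:0,1:] * p) + [:0,1:] * [:0,1:] * h"
  have c: "[:a:] * [:a:] = [:a:] + smult 2 [:(a * a - a) div 2:]"
    using e by (simp add: algebra_simps)
  have "(pCons a p) ^ 2 = ([:a:] + [:0,1:] * p) * ([:a:] + [:0,1:] * p)"
    by (simp add: power2_eq_square)
  also have "\<dots> = [:a:] * [:a:] + smult 2 (smult a ([:0,1:] * p)) + [:0,1:] * [:0,1:] * p^2"
    by (simp add: algebra_simps power2_eq_square smult_add_left aux2)
  also have "\<dots> = pcompose (pCons a p) [:0,0,1:] + smult 2 h'"
    unfolding h h'_def c pcompose_pCons g smult_add_right distrib_left mult_smult_right mult.assoc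
    by (simp only: add_ac)
  finally have "(pCons a p) ^ 2 = pcompose (pCons a p) [:0,0,1:] + smult 2 h'" .
  then show ?case by blast
qed

lemma inv_trunc0: assumes "coeff w 0 = 1" shows "\<exists>v. cgi 0 N (w * v) 1"
proof (induction N)
  case 0
  then show ?case using assms by (intro exI[of _ 1]) (auto simp: cgi_def)
next
  case (Suc N)
  then obtain v where "cgi 0 N (w * v) 1" by blast
  then obtain h r where hr: "w * v = 1 + smult 0 h + monom 1 (Suc N) * r" by (rule cgi_elim)
  define v' where "v' = v - monom (coeff r 0) (Suc N)"
  have m: "w * monom (coeff r 0) (Suc N) = monom 1 (Suc N) * smult (coeff r 0) w"
    by (metis mult.commute mult_smult_left smult_monom mult.right_neutral)
  have "w * v' = 1 + monom 1 (Suc N) * r - monom 1 (Suc N) * smult (coeff r 0) w"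
    unfolding v'_def right_diff_distrib hr m by simp
  then have "cgi 0 (Suc N) (w * v') 1"
    unfolding cgi_def using assms
    by (auto simp: coeff_monom_mult simp del: mult_smult_right)
  then show ?case by blast
qed

lemma inv_trunc: assumes "coeff w 0 = 1" shows "\<exists>v. cgi m N (w * v) 1"
  using inv_trunc0[OF assms, of N] cgi_mono by blast

lemma trunc_sq:
  assumes cg: "cgi 4 N P (f^2)" and N: "4 * degree P + 4 \<le> N"
  shows "\<exists>g. \<forall>k. (4::int) dvd coeff P k - coeff (g^2) k"
proof -
  define D where "D = degree P"
  obtain h0 where h0: "f ^ 2 = pcompose f [:0,0,1:] + smult 2 h0" using frob by blast
  have "cgi 2 N (f^2) (pcompose f [:0,0,1:])" by (rule cgi_intro[where h=h0 and w=0]) (simp add: h0)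
  then have c2: "cgi 2 N P (pcompose f [:0,0,1:])"
    using cgi_mono[OF cg, of 2 N] cgi_trans by simp
  define g where "g = poly_cutoff (Suc D) f"
  have cgk: "coeff g k = (if k \<le> D then coeff f k else 0)" for k
    unfolding g_def coeff_poly_cutoff by auto
  have "cgi 2 (N div 2) f g"
    unfolding cgi_def
  proof (intro allI impI)
    fix k assume k: "k \<le> N div 2"
    show "2 dvd coeff f k - coeff g k"
    proof (cases "k \<le> D")
      case True then show ?thesis by (simp add: cgk)
    next
      case False
      then have "coeff P (2 * k) = 0" using D_def by (intro coeff_eq_0) auto
      moreover have "2 dvd coeff P (2*k) - coeff (pcompose f [:0,0,1:]) (2*k)"
        using c2 k unfolding cgi_def by auto
      ultimately show ?thesis using False by (simp add: cgk coeff_pcomp_x2)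
    qed
  qed
  then obtain h w where fw: "f = g + smult 2 h + monom 1 (Suc (N div 2)) * w" by (rule cgi_elim)
  define M where "M = Suc (N div 2)"
  define Y where "Y = monom 1 M * w"
  have f2: "f^2 = (g^2 + smult 2 (g * Y)) + smult 4 (g * h + h * h + h * Y)
     + monom 1 (Suc N) * (monom 1 (2 * M - Suc N) * w * w)"
  proof -
    have mm: "monom 1 (Suc N) * monom 1 (2 * M - Suc N) = (monom 1 M * monom 1 M :: int poly)"
      by (simp add: mult_monom M_def mult_2)
    have fY: "f = g + smult 2 h + Y" using fw by (simp add: Y_def M_def)
    have "f^2 = g^2 + smult 2 (g * Y) + smult 4 (g * h + h * h + h * Y) + Y * Y"
      unfolding fY by (simp only: numeral_mult_conv_smult[symmetric] power2_eq_square) (simp add: algebra_simps)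
    moreover have "Y * Y = (monom 1 M * monom 1 M) * (w * w)" unfolding Y_def by (simp only: mult_ac)
    moreover have "(monom 1 M * monom 1 M) * (w * w) = monom 1 (Suc N) * (monom 1 (2 * M - Suc N) * w * w)"
      by (simp only: mm[symmetric] mult.assoc)
    ultimately show ?thesis by simp
  qed
  have c4: "cgi 4 N P (g^2 + smult 2 (g * Y))"
    by (rule cgi_trans[OF cg cgi_intro[OF f2]])
  have dg: "degree (g^2) \<le> 2 * D"
  proof -
    have "degree g \<le> D" by (rule degree_le) (auto simp: cgk)
    then show ?thesis using degree_power_le[of g 2] by simp
  qed
  have "\<forall>k. (4::int) dvd coeff P k - coeff (g^2) k"
  proof
    fix k
    show "(4::int) dvd coeff P k - coeff (g^2) k"
    proof (cases "k < M")
      case True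
      then have "k \<le> N" using N M_def by auto
      then have "4 dvd coeff P k - coeff (g^2 + smult 2 (g * Y)) k" using c4 unfolding cgi_def by auto
      moreover have "coeff (g * Y) k = 0" unfolding Y_def using True
        by (simp add: mult.left_commute[of g] coeff_monom_mult)
      ultimately show ?thesis by simp
    next
      case False
      then have "coeff P k = 0" using N M_def D_def by (intro coeff_eq_0) simp
      moreover have "coeff (g^2) k = 0" using False dg M_def N D_def by (intro coeff_eq_0) simp
      ultimately show ?thesis by simp
    qed
  qed
  then show ?thesis by blast
qed

lemma powk: "coeff y 0 = 0 \<Longrightarrow> \<exists>q. (1 + y)^k = 1 + y * q \<and> coeff q 0 = (int k :: int)"
proof (induction k)
  case 0 then show ?case by (intro exI[of _ 0]) simp
next
  case (Suc k)
  then obtain q where q: "(1 + y)^k = 1 + y * q" "coeff q 0 = int k" by blast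
  have "(1 + y)^Suc k = 1 + y * (1 + q + y * q)" using q(1) by (simp add: algebra_simps)
  moreover have "coeff (1 + q + y * q) 0 = int (Suc k)" using q(2) Suc.prems by (simp add: coeff_mult_0)
  ultimately show ?case by blast
qed

lemma sq_expand: "(U + Y + smult 2 h)^2 = U^2 + smult 2 (U*Y) + Y*Y + smult 4 (h*U + h*Y + h*h)"
  for U :: "int poly"
  by (simp only: numeral_mult_conv_smult[symmetric] power2_eq_square) (simp add: algebra_simps)

lemma lemL:
  assumes n: "n \<ge> 1" and k: "odd k" and U0: "odd (coeff U 0)"
    and cg: "cgi 4 (2*n) (U^2 * (1 + monom 1 (2*n))^k) (V^2)"
  shows False
proof -
  obtain q where q: "(1 + monom 1 (2*n))^k = 1 + monom 1 (2*n) * q" "coeff q 0 = int k"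
    using powk[of "monom 1 (2*n)" k] n by (auto simp: coeff_monom)
  define E where "E = 1 + monom 1 (2*n) * (q :: int poly)"
  have cg2: "cgi 2 (2*n) (U^2 * E) (V^2)" using cgi_mono[OF cg, of 2 "2*n"] q(1) E_def by simp
  obtain hu where hu: "U ^ 2 = pcompose U [:0,0,1:] + smult 2 hu" using frob by blast
  obtain hv where hv: "V ^ 2 = pcompose V [:0,0,1:] + smult 2 hv" using frob by blast
  have a0: "cgi 2 (2*n) (U^2) (pcompose U [:0,0,1:])" by (rule cgi_intro[where h=hu and w=0]) (simp add: hu)
  have a1: "cgi 2 (2*n) (pcompose U [:0,0,1:] * E) (U^2 * E)" by (rule cgi_mult[OF cgi_sym[OF a0] cgi_refl])
  have a2: "cgi 2 (2*n) (V^2) (pcompose V [:0,0,1:])" by (rule cgi_intro[where h=hv and w=0]) (simp add: hv)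
  have A: "cgi 2 (2*n) (pcompose U [:0,0,1:] * E) (pcompose V [:0,0,1:])"
    using cgi_trans[OF cgi_trans[OF a1 cg2] a2] .
  have cE: "coeff (pcompose U [:0,0,1:] * E) (2 * j) =
      coeff U j + (if j < n then 0 else coeff (pcompose U [:0,0,1:] * q) (2 * j - 2 * n))" for j
    unfolding E_def by (simp add: distrib_left coeff_monom_mult mult.left_commute[of _ "monom 1 (2*n)"] coeff_pcomp_x2)
  have B: "cgi 2 n V (U + monom 1 n)"
    unfolding cgi_def
  proof (intro allI impI)
    fix j assume j: "j \<le> n"
    have d: "2 dvd coeff (pcompose U [:0,0,1:] * E) (2 * j) - coeff V j"
      using A j unfolding cgi_def by (auto simp: coeff_pcomp_x2)
    show "2 dvd coeff V j - coeff (U + monom 1 n) j"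
    proof (cases "j < n")
      case True then show ?thesis using d cE[of j] by (simp add: coeff_monom dvd_diff_commute)
    next
      case False
      then have jn: "j = n" using j by simp
      have "coeff (pcompose U [:0,0,1:] * q) 0 = coeff U 0 * int k"
        by (simp add: coeff_mult_0 q(2) poly_0_coeff_0)
      then have d': "2 dvd coeff U n + coeff U 0 * int k - coeff V n" using d cE[of n] jn by simp
      have "odd (coeff U 0 * int k)" using U0 k by simp
      then show ?thesis using d' jn by (simp add: coeff_monom)
    qed
  qed
  then obtain h w where Vw: "V = U + monom 1 n + smult 2 h + monom 1 (Suc n) * w" by (rule cgi_elim)
  define Z where "Z = 1 + monom 1 1 * w"
  define Y where "Y = monom 1 n * Z"
  have VY: "V = U + Y + smult 2 h"
    unfolding Vw Y_def Z_def by (simp add: algebra_simps mult_monom)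
  have YY: "Y * Y = monom 1 (2*n) * (Z * Z)"
    unfolding Y_def by (simp add: mult_ac mult_monom mult_2 mult_2_right)
  have UY: "U * Y = monom 1 n * (U * Z)" unfolding Y_def by (simp add: mult_ac)
  have V2: "V^2 = U^2 + smult 2 (monom 1 n * (U * Z)) + monom 1 (2*n) * (Z * Z) + smult 4 (h*U + h*Y + h*h)"
    unfolding VY sq_expand UY YY ..
  have cV: "coeff (V^2) n = coeff (U^2) n + 2 * coeff U 0 + 4 * coeff (h*U + h*Y + h*h) n"
    using n unfolding V2 by (simp add: coeff_monom_mult coeff_mult_0 Z_def)
  have cL: "coeff (U^2 * (1 + monom 1 (2*n))^k) n = coeff (U^2) n"
    using n unfolding q(1) by (simp add: distrib_left coeff_monom_mult mult.left_commute[of _ "monom 1 (2*n)"])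
  have "4 dvd coeff (U^2 * (1 + monom 1 (2*n))^k) n - coeff (V^2) n" using cg unfolding cgi_def by auto
  then have "(4::int) dvd 2 * coeff U 0 + 4 * coeff (h*U + h*Y + h*h) n" unfolding cL cV
    by (metis add.assoc add_diff_cancel_left' dvd_minus_iff minus_diff_eq)
  then have "(4::int) dvd 2 * coeff U 0" by (simp add: dvd_add_left_iff)
  then show False using U0 by presburger
qed

definition DD :: "int poly \<Rightarrow> (nat \<Rightarrow> int) \<Rightarrow> nat \<Rightarrow> int poly" where
  "DD c b N = c * expZ_neg b N - expZ_pos b N"

lemma negX_pow[simp]: "[:0,-1:]^s = (monom ((-1)^s) s :: int poly)"
  by (induction s) (auto simp: monom_Suc smult_monom monom_0)

lemma negX_pow': "(- [:0,1:])^s = (monom ((-1)^s) s :: int poly)"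
  by simp

lemma poly0_fac: "i \<ge> 1 \<Longrightarrow> poly (1 + (- [:0,1:])^i) 0 = (1::int)"
  by (simp add: poly_monom zero_power)

lemma coeff0_expZ_pos: "coeff (expZ_pos b N) 0 = 1"
  unfolding expZ_pos_def poly_0_coeff_0[symmetric] poly_prod
  by (auto intro!: prod.neutral simp: poly_monom zero_power)

lemma coeff0_expZ_neg: "coeff (expZ_neg b N) 0 = 1"
  unfolding expZ_neg_def poly_0_coeff_0[symmetric] poly_prod
  by (auto intro!: prod.neutral simp: poly_monom zero_power)

lemma fac_pow:
  assumes "s \<ge> 1"
  obtains q where "(1 + (- [:0,1:])^s)^e = 1 + monom 1 s * q" "coeff q 0 = (-1)^s * int e"
proof -
  have "coeff (monom ((-1)^s) s) 0 = (0::int)" using assms by (simp add: coeff_monom)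
  then obtain q where q: "(1 + monom ((-1)^s) s)^e = 1 + monom ((-1)^s) s * q" "coeff q 0 = int e"
    using powk by blast
  have "monom ((-1)^s) s * q = monom 1 s * smult ((-1)^s) q"
    by (metis mult_smult_left mult_smult_right smult_monom mult.right_neutral)
  then have "(1 + (- [:0,1:])^s)^e = 1 + monom 1 s * smult ((-1)^s) q"
    unfolding negX_pow' using q(1) by (simp only:)
  then show ?thesis using q(2) by (intro that[of "smult ((-1)^s) q"]) auto
qed

lemma DD_step:
  assumes c0: "coeff c 0 = 1" and j: "j \<le> Suc m"
  shows "coeff (DD c b (Suc m)) j = coeff (DD c b m) j - (if j = Suc m then (-1)^(Suc m) * b (Suc m) else 0)"
proof -
  define s where "s = Suc m"
  have s1: "1 \<le> s" by (simp add: s_def)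
  obtain qp where qp: "(1 + (- [:0,1:])^s)^(nat (b s)) = 1 + monom 1 s * qp" "coeff qp 0 = (-1)^s * int (nat (b s))"
    using fac_pow[OF s1, of "nat (b s)"] by blast
  obtain qn where qn: "(1 + (- [:0,1:])^s)^(nat (- b s)) = 1 + monom 1 s * qn" "coeff qn 0 = (-1)^s * int (nat (- b s))"
    using fac_pow[OF s1, of "nat (- b s)"] by blast
  have ins: "{1..s} = insert s {1..m}" using s_def by auto
  have p0: "expZ_pos b s = (1 + (- [:0,1:])^s)^(nat (b s)) * expZ_pos b m"
    unfolding expZ_pos_def ins by (rule prod.insert) (auto simp: s_def)
  have n0: "expZ_neg b s = (1 + (- [:0,1:])^s)^(nat (- b s)) * expZ_neg b m"
    unfolding expZ_neg_def ins by (rule prod.insert) (auto simp: s_def)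
  have p: "expZ_pos b s = expZ_pos b m * (1 + monom 1 s * qp)"
    unfolding p0 qp(1) by (rule mult.commute)
  have n: "expZ_neg b s = expZ_neg b m * (1 + monom 1 s * qn)"
    unfolding n0 qn(1) by (rule mult.commute)
  have "DD c b s = DD c b m + monom 1 s * (c * expZ_neg b m * qn - expZ_pos b m * qp)"
    unfolding DD_def p n by (simp add: algebra_simps)
  moreover have "coeff (c * expZ_neg b m * qn - expZ_pos b m * qp) 0 = - ((-1)^s * b s)"
    using qp(2) qn(2) c0 by (simp add: coeff_mult_0 coeff0_expZ_pos coeff0_expZ_neg algebra_simps)
  ultimately show ?thesis using j unfolding s_def[symmetric]
    by (auto simp: coeff_monom_mult)
qed

lemma is_logZ_DD: "is_logZ c b \<longleftrightarrow> b 0 = 0 \<and> (\<forall>N k. k \<le> N \<longrightarrow> coeff (DD c b N) k = 0)"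
  unfolding is_logZ_def DD_def by simp

lemma expZ_cong: "(\<And>i. 1 \<le> i \<Longrightarrow> i \<le> N \<Longrightarrow> b i = b' i) \<Longrightarrow> DD c b N = DD c b' N"
  unfolding DD_def expZ_pos_def expZ_neg_def by (auto intro!: prod.cong arg_cong2[where f="(-)"] arg_cong2[where f="(*)"])

lemma logZ_unique:
  assumes c0: "coeff c 0 = 1" and b: "is_logZ c b" and b': "is_logZ c b'"
  shows "b = b'"
proof -
  have "\<forall>i\<le>n. b i = b' i" for n
  proof (induction n)
    case 0 then show ?case using b b' by (simp add: is_logZ_DD)
  next
    case (Suc m)
    have e: "DD c b m = DD c b' m" using Suc.IH by (intro expZ_cong) auto
    have "coeff (DD c b (Suc m)) (Suc m) = 0" "coeff (DD c b' (Suc m)) (Suc m) = 0"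
      using b b' by (auto simp: is_logZ_DD)
    moreover have "coeff (DD c b (Suc m)) (Suc m) = coeff (DD c b m) (Suc m) - (-1)^(Suc m) * b (Suc m)"
      using DD_step[OF c0, of "Suc m" m b] by simp
    moreover have "coeff (DD c b' (Suc m)) (Suc m) = coeff (DD c b' m) (Suc m) - (-1)^(Suc m) * b' (Suc m)"
      using DD_step[OF c0, of "Suc m" m b'] by simp
    ultimately have "(-1)^(Suc m) * b (Suc m) = (-1)^(Suc m) * b' (Suc m)" unfolding e by linarith
    then have "b (Suc m) = b' (Suc m)" by simp
    then show ?case using Suc.IH le_Suc_eq by auto
  qed
  then show ?thesis by auto
qed

fun bl :: "int poly \<Rightarrow> nat \<Rightarrow> nat \<Rightarrow> int" where
  "bl c 0 = (\<lambda>_. 0)"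
| "bl c (Suc n) = (bl c n)(Suc n := (-1)^(Suc n) * coeff (DD c (bl c n) n) (Suc n))"

lemma bl_stable: "i \<le> n \<Longrightarrow> bl c n i = bl c i i"
proof (induction n)
  case 0 then show ?case by simp
next
  case (Suc n)
  then show ?case by (cases "i = Suc n") auto
qed

lemma logZ_exists:
  assumes c0: "coeff c 0 = 1"
  shows "is_logZ c (\<lambda>i. bl c i i)"
proof -
  define B where "B = (\<lambda>i. bl c i i)"
  have DB: "DD c B N = DD c (bl c N) N" for N
  proof (rule expZ_cong)
    fix i assume "1 \<le> i" "i \<le> N"
    then show "B i = bl c N i" unfolding B_def using bl_stable[of i N c] by simp
  qed
  have "\<forall>k\<le>N. coeff (DD c B N) k = 0" for N
  proof (induction N)
    case 0
    then show ?case using c0 by (simp add: DD_def expZ_pos_def expZ_neg_def)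
  next
    case (Suc m)
    have "B (Suc m) = (-1)^(Suc m) * coeff (DD c (bl c m) m) (Suc m)"
      unfolding B_def by simp
    then have Bs: "B (Suc m) = (-1)^(Suc m) * coeff (DD c B m) (Suc m)"
      using DB[of m] by simp
    show ?case
    proof (intro allI impI)
      fix k assume k: "k \<le> Suc m"
      show "coeff (DD c B (Suc m)) k = 0"
      proof (cases "k = Suc m")
        case True
        then show ?thesis using DD_step[OF c0 k, of B] Bs by simp
      next
        case False
        then show ?thesis using DD_step[OF c0 k, of B] Suc.IH k by simp
      qed
    qed
  qed
  moreover have "B 0 = 0" by (simp add: B_def)
  ultimately show ?thesis unfolding is_logZ_DD B_def by simp
qed

lemma logZ_eq: "coeff c 0 = 1 \<Longrightarrow> is_logZ c b \<Longrightarrow> logZ c = b"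
  unfolding logZ_def using logZ_unique by blast

lemma logZ_is: "coeff c 0 = 1 \<Longrightarrow> is_logZ c (logZ c)"
  using logZ_eq logZ_exists by metis

definition TT :: "int poly \<Rightarrow> int poly" where
  "TT q = q * pcompose q [:0,0,1:] * pcompose q [:0,-1:]"

lemma TT_mult: "TT (p * q) = TT p * TT q"
  unfolding TT_def by (simp add: pcompose_mult mult_ac)

lemma TT_1: "TT 1 = 1" unfolding TT_def by (simp add: pcompose_1)

lemma TT_power: "TT (p ^ k) = TT p ^ k"
  by (induction k) (auto simp: TT_mult TT_1)

lemma TT_prod: "TT (prod f A) = (\<Prod>i\<in>A. TT (f i))"
  by (induction A rule: infinite_finite_induct) (auto simp: TT_mult TT_1)

lemma cgi_TT: "cgi m N p q \<Longrightarrow> cgi m N (TT p) (TT q)"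
  unfolding TT_def by (intro cgi_mult cgi_x2 cgi_nx)

lemma pcomp_monom: "pcompose (monom a i) r = smult a (r ^ i)" for r :: "int poly"
  by (simp add: monom_altdef pcompose_smult pcompose_power pcompose_pCons)

definition sqf :: "nat \<Rightarrow> int poly" where
  "sqf i = (if even i then 1 + monom 1 i else 1 - monom 1 (2*i))"
definition af :: "nat \<Rightarrow> int poly" where
  "af i = (if even i then 1 + monom 1 (2*i) else 1)"

lemma TT_fac: "TT (1 + (- [:0,1:])^i) = (sqf i)^2 * af i"
proof -
  define Y where "Y = (monom 1 i :: int poly)"
  have x2: "[:0,0,1:] = (monom 1 2 :: int poly)" by (simp add: numeral_2_eq_2 monom_Suc monom_0)
  have Y2: "monom 1 (2*i) = Y * Y" unfolding Y_def by (simp add: mult_monom mult_2)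
  have a: "pcompose (monom ((-1)^i) i) [:0,0,1:] = smult ((-1)^i) (Y * Y)"
    unfolding pcomp_monom x2 monom_power Y2[symmetric] by (simp add: mult.commute)
  have b: "pcompose (monom ((-1)^i) i) [:0,-1:] = Y"
    unfolding pcomp_monom Y_def by (simp add: smult_monom power_mult_distrib[symmetric])
  have f: "1 + (- [:0,1:])^i = (1 + monom ((-1)^i) i :: int poly)" by (simp only: negX_pow')
  have T: "TT (1 + (- [:0,1:])^i) = (1 + monom ((-1)^i) i) * (1 + smult ((-1)^i) (Y * Y)) * (1 + Y)"
    unfolding f TT_def pcompose_add pcompose_1 a b ..
  show ?thesis
  proof (cases "even i")
    case True
    then show ?thesis unfolding T sqf_def af_def Y2 by (simp add: Y_def power2_eq_square mult_ac)
  next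
    case False
    then have m: "monom ((-1)^i) i = - Y" unfolding Y_def by (simp add: minus_monom)
    show ?thesis unfolding T m sqf_def af_def Y2 using False
      by (simp add: power2_eq_square algebra_simps)
  qed
qed

definition SP :: "(nat \<Rightarrow> int) \<Rightarrow> nat \<Rightarrow> int poly" where
  "SP b N = (\<Prod>i\<in>{1..N}. sqf i ^ nat (b i))"
definition AP :: "(nat \<Rightarrow> int) \<Rightarrow> nat \<Rightarrow> int poly" where
  "AP b N = (\<Prod>i\<in>{1..N}. af i ^ nat (b i))"

lemma TT_pos: "TT (expZ_pos b N) = (SP b N)^2 * AP b N"
proof -
  have "TT (expZ_pos b N) = (\<Prod>i\<in>{1..N}. ((sqf i)^2 * af i) ^ nat (b i))"
    unfolding expZ_pos_def TT_prod TT_power TT_fac ..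
  also have "\<dots> = (\<Prod>i\<in>{1..N}. (sqf i ^ nat (b i))^2 * af i ^ nat (b i))"
    by (intro prod.cong refl) (simp add: power_mult_distrib power_mult[symmetric] mult.commute)
  also have "\<dots> = (SP b N)^2 * AP b N"
    unfolding SP_def AP_def prod.distrib prod_power_distrib ..
  finally show ?thesis .
qed

lemma expZ_neg_pos: "expZ_neg b N = expZ_pos (\<lambda>i. - b i) N"
  unfolding expZ_neg_def expZ_pos_def ..

lemma poly0_sqf: "i \<ge> 1 \<Longrightarrow> poly (sqf i) 0 = 1"
  unfolding sqf_def by (simp add: poly_monom zero_power)
lemma poly0_af: "i \<ge> 1 \<Longrightarrow> poly (af i) 0 = 1"
  unfolding af_def by (simp add: poly_monom zero_power)

lemma coeff0_SP: "coeff (SP b N) 0 = 1"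
  unfolding SP_def poly_0_coeff_0[symmetric] poly_prod
  by (auto intro!: prod.neutral simp: poly0_sqf)

lemma coeff0_prod_af: "(\<And>i. i \<in> A \<Longrightarrow> i \<ge> 1) \<Longrightarrow> coeff (\<Prod>i\<in>A. af i ^ f i) 0 = 1"
  unfolding poly_0_coeff_0[symmetric] poly_prod
  by (auto intro!: prod.neutral simp: poly0_af)

lemma cgi_af_big: "2 * n < 2 * i \<Longrightarrow> cgi m (2*n) (af i) 1"
  unfolding af_def cgi_def by (auto simp: coeff_monom)

lemma AP_split:
  fixes e :: "nat \<Rightarrow> nat"
  assumes ev: "\<And>i. 1 \<le> i \<Longrightarrow> i < n \<Longrightarrow> even i \<Longrightarrow> even (e i)" and n: "1 \<le> n"
  shows "cgi m (2*n) (\<Prod>i\<in>{1..2*n}. af i ^ e i)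
           ((\<Prod>i\<in>{1..2*n}. af i ^ (if i < n then e i div 2 else 0))^2 * af n ^ e n)"
proof -
  have r: "(\<Prod>i\<in>{1..2*n}. af i ^ (if i < n then e i div 2 else 0))^2 * af n ^ e n =
     (\<Prod>i\<in>{1..2*n}. (af i ^ (if i < n then e i div 2 else 0))^2 * (if i = n then af n ^ e n else 1))"
    using n by (simp add: prod.distrib prod_power_distrib)
  have "cgi m (2*n) (af i ^ e i) ((af i ^ (if i < n then e i div 2 else 0))^2 * (if i = n then af n ^ e n else 1))"
    if i: "i \<in> {1..2*n}" for i
  proof (cases "i < n")
    case True
    show ?thesis
    proof (cases "even i")
      case True
      then have "even (e i)" using ev i \<open>i < n\<close> by auto
      then have "af i ^ e i = (af i ^ (e i div 2))^2"
        by (metis dvd_mult_div_cancel power_mult mult.commute)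
      then show ?thesis using \<open>i < n\<close> by simp
    next
      case False
      then show ?thesis using \<open>i < n\<close> by (simp add: af_def)
    qed
  next
    case False
    show ?thesis
    proof (cases "i = n")
      case True then show ?thesis by simp
    next
      case False
      then have "n < i" using \<open>\<not> i < n\<close> by simp
      then have "cgi m (2*n) (af i ^ e i) (1 ^ e i)" by (intro cgi_power cgi_af_big) simp
      then show ?thesis using False \<open>\<not> i < n\<close> by simp
    qed
  qed
  then show ?thesis unfolding r by (intro cgi_prod)
qed

lemma even_nat: "even (x::int) \<Longrightarrow> even (nat x)"
  by (cases "x \<ge> 0") (auto simp: even_nat_iff)

lemma coeff0_TT: "coeff c 0 = 1 \<Longrightarrow> coeff (TT c) 0 = 1"
  unfolding TT_def by (simp add: coeff_mult_0 poly_0_coeff_0)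

lemma AP_sq:
  assumes "\<And>i. 1 \<le> i \<Longrightarrow> even i \<Longrightarrow> even (b i)"
  shows "AP b N = (\<Prod>i\<in>{1..N}. af i ^ (nat (b i) div 2))^2"
  unfolding AP_def prod_power_distrib
proof (intro prod.cong refl)
  fix i assume i: "i \<in> {1..N}"
  show "af i ^ nat (b i) = (af i ^ (nat (b i) div 2))^2"
  proof (cases "even i")
    case True
    then have "even (nat (b i))" using assms i even_nat by auto
    then show ?thesis by (metis dvd_mult_div_cancel power_mult mult.commute)
  next
    case False then show ?thesis by (simp add: af_def)
  qed
qed

lemma logZ_cgi:
  assumes c0: "coeff c 0 = 1"
  shows "cgi 4 N (TT c * (SP (\<lambda>i. - logZ c i) N)^2 * AP (\<lambda>i. - logZ c i) N)
                  ((SP (logZ c) N)^2 * AP (logZ c) N)"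
proof -
  have "is_logZ c (logZ c)" by (rule logZ_is[OF c0])
  then have "cgi 4 N (c * expZ_neg (logZ c) N) (expZ_pos (logZ c) N)"
    unfolding is_logZ_def cgi_def by simp
  then have "cgi 4 N (TT (c * expZ_neg (logZ c) N)) (TT (expZ_pos (logZ c) N))" by (rule cgi_TT)
  then show ?thesis unfolding TT_mult expZ_neg_pos TT_pos by (simp add: mult.assoc)
qed

lemma core_B_A:
  assumes c0: "coeff c 0 = 1" and ev: "\<forall>j\<ge>1. even (logZ c (2*j))"
  shows "\<exists>g. \<forall>k. (4::int) dvd coeff (TT c) k - coeff (g^2) k"
proof -
  define b where "b = logZ c"
  define P where "P = TT c"
  define N where "N = 4 * degree P + 4"
  have evb: "even (b i)" if "1 \<le> i" "even i" for i
  proof -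
    obtain j where j: "i = 2 * j" using \<open>even i\<close> by blast
    then have "j \<ge> 1" using that by simp
    then show ?thesis using ev j b_def by auto
  qed
  have evb': "even (- b i)" if "1 \<le> i" "even i" for i using evb[OF that] by simp
  define Wn where "Wn = SP (\<lambda>i. - b i) N * (\<Prod>i\<in>{1..N}. af i ^ (nat (- b i) div 2))"
  define Wp where "Wp = SP b N * (\<Prod>i\<in>{1..N}. af i ^ (nat (b i) div 2))"
  have cg: "cgi 4 N (P * Wn^2) (Wp^2)"
    using logZ_cgi[OF c0, of N] AP_sq[of b N, OF evb] AP_sq[of "\<lambda>i. - b i" N, OF evb']
    unfolding Wn_def Wp_def P_def b_def[symmetric] by (simp add: power_mult_distrib mult_ac)
  have "coeff Wn 0 = 1" unfolding Wn_def
    using coeff0_prod_af[of "{1..N}" "\<lambda>i. nat (- b i) div 2"] by (simp add: coeff_mult_0 coeff0_SP)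
  then obtain V where V: "cgi 4 N (Wn * V) 1" using inv_trunc by blast
  have "cgi 4 N (P * Wn^2 * V^2) (Wp^2 * V^2)" using cg by (rule cgi_mult) simp
  moreover have "cgi 4 N (P * (Wn * V)^2) (P * 1^2)" by (intro cgi_mult cgi_power V cgi_refl)
  ultimately have "cgi 4 N P ((Wp * V)^2)"
    by (metis (no_types, lifting) cgi_sym cgi_trans mult.assoc mult.right_neutral one_power2 power_mult_distrib)
  then show ?thesis using trunc_sq[of N P] N_def P_def by auto
qed

lemma core_A_B:
  assumes c0: "coeff c 0 = 1" and gA: "\<forall>k. (4::int) dvd coeff (TT c) k - coeff (g^2) k"
  shows "\<forall>j\<ge>1. even (logZ c (2*j))"
proof (rule ccontr)
  assume "\<not> (\<forall>j\<ge>1. even (logZ c (2*j)))"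
  then have ex: "\<exists>j. j \<ge> 1 \<and> odd (logZ c (2*j))" by auto
  define b where "b = logZ c"
  define j0 where "j0 = (LEAST j. j \<ge> 1 \<and> odd (b (2*j)))"
  have j0: "j0 \<ge> 1" "odd (b (2*j0))" using LeastI_ex[OF ex] unfolding j0_def b_def by auto
  have j0min: "even (b (2*j))" if "1 \<le> j" "j < j0" for j
    using not_less_Least[of j "\<lambda>j. j \<ge> 1 \<and> odd (b (2*j))"] that unfolding j0_def by auto
  define n where "n = 2 * j0"
  have n1: "1 \<le> n" using j0 n_def by simp
  have evn: "even n" by (simp add: n_def)
  have evb: "even (b i)" if "1 \<le> i" "i < n" "even i" for i
  proof -
    obtain j where j: "i = 2 * j" using \<open>even i\<close> by blast
    then show ?thesis using j0min[of j] that n_def by auto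
  qed
  define N where "N = 2 * n"
  define bn where "bn = (\<lambda>i. - b i)"
  define Rp where "Rp = (\<Prod>i\<in>{1..2*n}. af i ^ (if i < n then nat (b i) div 2 else 0))"
  define Rn where "Rn = (\<Prod>i\<in>{1..2*n}. af i ^ (if i < n then nat (bn i) div 2 else 0))"
  have sp: "cgi 4 N (AP b N) (Rp^2 * af n ^ nat (b n))"
    unfolding AP_def N_def Rp_def
    by (rule AP_split[OF _ n1]) (auto intro!: even_nat evb)
  have sn: "cgi 4 N (AP bn N) (Rn^2 * af n ^ nat (bn n))"
    unfolding AP_def N_def Rn_def
    by (rule AP_split[OF _ n1]) (auto intro!: even_nat simp: bn_def evb)
  have cP: "cgi 4 N (TT c) (g^2)" using gA unfolding cgi_def by auto
  have main: "cgi 4 N (g^2 * (SP bn N)^2 * (Rn^2 * af n ^ nat (bn n))) ((SP b N)^2 * (Rp^2 * af n ^ nat (b n)))"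
  proof -
    have "cgi 4 N (TT c * (SP bn N)^2 * AP bn N) ((SP b N)^2 * AP b N)"
      using logZ_cgi[OF c0, of N] unfolding bn_def b_def .
    moreover have "cgi 4 N (TT c * (SP bn N)^2 * AP bn N) (g^2 * (SP bn N)^2 * (Rn^2 * af n ^ nat (bn n)))"
      by (intro cgi_mult cP sn cgi_refl)
    moreover have "cgi 4 N ((SP b N)^2 * AP b N) ((SP b N)^2 * (Rp^2 * af n ^ nat (b n)))"
      by (intro cgi_mult sp cgi_refl)
    ultimately show ?thesis by (meson cgi_sym cgi_trans)
  qed
  have afn: "af n = 1 + monom 1 (2*n)" using evn by (simp add: af_def)
  have c0SP: "coeff (SP b' N) 0 = 1" for b' by (rule coeff0_SP)
  have c0Rp: "coeff Rp 0 = 1" unfolding Rp_def by (rule coeff0_prod_af) simp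
  have c0Rn: "coeff Rn 0 = 1" unfolding Rn_def by (rule coeff0_prod_af) simp
  have g0: "odd (coeff g 0)"
  proof -
    have "4 dvd coeff (TT c) 0 - coeff (g^2) 0" using gA by blast
    then have "4 dvd 1 - coeff g 0 * coeff g 0" using coeff0_TT[OF c0] by (simp add: power2_eq_square coeff_mult_0)
    then have "2 dvd 1 - coeff g 0 * coeff g 0" by (rule dvd_trans[rotated]) simp
    then show ?thesis by auto
  qed
  have bn0: "b n \<noteq> 0" using j0 n_def by auto
  show False
  proof (cases "b n > 0")
    case True
    then have "nat (bn n) = 0" by (simp add: bn_def)
    moreover have "odd (nat (b n))" using True j0 n_def by (simp add: even_nat_iff)
    moreover note main
    ultimately have "cgi 4 (2*n) ((g * SP bn N * Rn)^2) ((SP b N * Rp)^2 * (1 + monom 1 (2*n)) ^ nat (b n))"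
      unfolding afn N_def by (simp add: power_mult_distrib mult_ac)
    then have "cgi 4 (2*n) ((SP b N * Rp)^2 * (1 + monom 1 (2*n)) ^ nat (b n)) ((g * SP bn N * Rn)^2)"
      by (rule cgi_sym)
    then show False
      by (rule lemL[OF n1 \<open>odd (nat (b n))\<close>, rotated]) (simp add: coeff_mult_0 c0SP c0Rp)
  next
    case False
    then have "b n < 0" using bn0 by simp
    then have "nat (b n) = 0" by simp
    moreover have "odd (nat (bn n))" using \<open>b n < 0\<close> j0 n_def by (simp add: even_nat_iff bn_def)
    moreover note main
    ultimately have "cgi 4 (2*n) ((g * SP bn N * Rn)^2 * (1 + monom 1 (2*n)) ^ nat (bn n)) ((SP b N * Rp)^2)"
      unfolding afn N_def by (simp add: power_mult_distrib mult_ac)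
    then show False
      by (rule lemL[OF n1 \<open>odd (nat (bn n))\<close>, rotated]) (simp add: coeff_mult_0 c0SP c0Rn g0)
  qed
qed

lemma coeff_halfsum: "coeff (\<Sum>n\<le>degree C. monom (coeff C (2 * n)) n) m = coeff C (2 * m)"
  for C :: "'a::comm_ring_1 poly"
proof (cases "m \<le> degree C")
  case True then show ?thesis by (simp add: coeff_sum_monom)
next
  case False
  then have "coeff C (2 * m) = 0" by (intro coeff_eq_0) simp
  then show ?thesis using False by (auto simp: coeff_sum coeff_monom intro!: sum.neutral)
qed

lemma coeff_conway_x: "coeff (conway_x C) m = coeff C (2 * m)"
  unfolding conway_x_def by (rule coeff_halfsum)

lemma halfsum_x2:
  assumes "\<forall>n. odd n \<longrightarrow> coeff F n = 0"
  shows "pcompose (\<Sum>n\<le>degree F. monom (coeff F (2 * n)) n) [:0,0,1:] = (F :: 'a::comm_ring_1 poly)"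
  by (rule poly_eqI) (auto simp: coeff_pcomp_x2 coeff_halfsum assms)

lemma x2_inj: "pcompose p [:0,0,1:] = pcompose q [:0,0,1:] \<Longrightarrow> p = (q :: 'a::comm_ring_1 poly)"
proof (rule poly_eqI)
  fix n assume "pcompose p [:0,0,1:] = pcompose q [:0,0,1:]"
  then have "coeff (pcompose p [:0,0,1:]) (2*n) = coeff (pcompose q [:0,0,1:]) (2*n)" by simp
  then show "coeff p n = coeff q n" by (simp add: coeff_pcomp_x2)
qed

lemma conway_decomp: "conway_type C \<Longrightarrow> C = pcompose (conway_x C) [:0,0,1:]"
  unfolding conway_type_def
  by (intro poly_eqI) (auto simp: coeff_pcomp_x2 coeff_conway_x)

lemma conway_iz_eq: "conway_type C \<Longrightarrow> conway_iz C = pcompose (pcompose (conway_x C) [:0,-1:]) [:0,0,1:]"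
proof (rule poly_eqI)
  fix n assume ct: "conway_type C"
  have l: "coeff (conway_iz C) n = (if even n then (-1)^(n div 2) * coeff C n else 0)"
  proof (cases "n \<le> degree C")
    case True then show ?thesis unfolding conway_iz_def by (simp add: coeff_sum_monom)
  next
    case False
    then have "coeff C n = 0" by (intro coeff_eq_0) simp
    then show ?thesis using False unfolding conway_iz_def
      by (auto simp: coeff_sum coeff_monom intro!: sum.neutral)
  qed
  show "coeff (conway_iz C) n = coeff (pcompose (pcompose (conway_x C) [:0,-1:]) [:0,0,1:]) n"
    unfolding l by (simp add: coeff_pcomp_x2 coeff_pcomp_nx coeff_conway_x)
qed

lemma prod_eq: "conway_type C \<Longrightarrow> C * conway_sq C * conway_iz C = pcompose (TT (conway_x C)) [:0,0,1:]"
  unfolding conway_sq_def TT_def pcompose_mult conway_iz_eq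
  by (subst (1 2) conway_decomp) auto

lemma mod4_x2: "mod4 (pcompose p [:0,0,1:]) = pcompose (mod4 p) [:0,0,1:]"
  unfolding mod4_def by (rule poly_eqI) (simp add: coeff_map_poly coeff_pcomp_x2)

lemma mod4_mult: "mod4 (p * q) = mod4 p * mod4 q"
  unfolding mod4_def by (rule poly_eqI) (simp add: coeff_map_poly coeff_mult)

lemma mod4_eq_iff: "mod4 p = mod4 q \<longleftrightarrow> (\<forall>k. (4::int) dvd coeff p k - coeff q k)"
proof -
  have e: "(of_int a :: 4) = of_int b \<longleftrightarrow> (4::int) dvd a - b" for a b
  proof -
    have "(of_int a :: 4) = of_int b \<longleftrightarrow> (of_int (a - b) :: 4) = 0" by simp
    also have "\<dots> \<longleftrightarrow> int CHAR(4) dvd a - b" by (rule of_int_eq_0_iff_char_dvd)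
    finally show ?thesis by simp
  qed
  show ?thesis unfolding mod4_def poly_eq_iff by (simp add: coeff_map_poly e)
qed

lemma mod4_surj: "\<exists>g. mod4 g = (f :: 4 poly)"
proof
  show "mod4 (map_poly Rep_bit0 f) = f"
    unfolding mod4_def
  proof (rule poly_eqI)
    fix n
    have r: "of_int (Rep_bit0 x) = (x::4)" for x
      unfolding bit0.of_int_eq bit0.Rep_mod by (rule bit0.Rep_inverse)
    have "coeff (map_poly Rep_bit0 f) n = Rep_bit0 (coeff f n)" by (rule coeff_map_poly) (rule bit0.Rep_0)
    then show "coeff (map_poly of_int (map_poly Rep_bit0 f)) n = coeff f n" by (simp add: coeff_map_poly r)
  qed
qed

lemma sq4_iff: "(\<exists>f :: 4 poly. f^2 = mod4 Q) \<longleftrightarrow> (\<exists>g. \<forall>k. (4::int) dvd coeff Q k - coeff (g^2) k)"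
proof
  assume "\<exists>f :: 4 poly. f^2 = mod4 Q"
  then obtain f :: "4 poly" where f: "f^2 = mod4 Q" by blast
  obtain g where "mod4 g = f" using mod4_surj by blast
  then have "mod4 Q = mod4 (g^2)" using f by (simp add: power2_eq_square mod4_mult)
  then show "\<exists>g. \<forall>k. (4::int) dvd coeff Q k - coeff (g^2) k" unfolding mod4_eq_iff by blast
next
  assume "\<exists>g. \<forall>k. (4::int) dvd coeff Q k - coeff (g^2) k"
  then obtain g where "mod4 Q = mod4 (g^2)" unfolding mod4_eq_iff by blast
  then show "\<exists>f :: 4 poly. f^2 = mod4 Q" by (intro exI[of _ "mod4 g"]) (simp add: power2_eq_square mod4_mult)
qed

lemma even_sq_iff:
  "(\<exists>F :: 4 poly. (\<forall>n. odd n \<longrightarrow> coeff F n = 0) \<and> F ^ 2 = mod4 (pcompose Q [:0,0,1:]))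
   \<longleftrightarrow> (\<exists>f :: 4 poly. f^2 = mod4 Q)"
proof
  assume "\<exists>F :: 4 poly. (\<forall>n. odd n \<longrightarrow> coeff F n = 0) \<and> F ^ 2 = mod4 (pcompose Q [:0,0,1:])"
  then obtain F :: "4 poly" where F: "\<forall>n. odd n \<longrightarrow> coeff F n = 0" "F ^ 2 = mod4 (pcompose Q [:0,0,1:])" by blast
  define f where "f = (\<Sum>n\<le>degree F. monom (coeff F (2 * n)) n)"
  have "pcompose f [:0,0,1:] = F" unfolding f_def by (rule halfsum_x2[OF F(1)])
  then have "pcompose (f^2) [:0,0,1:] = pcompose (mod4 Q) [:0,0,1:]"
    using F(2) by (simp add: pcompose_power mod4_x2)
  then show "\<exists>f :: 4 poly. f^2 = mod4 Q" using x2_inj by blast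
next
  assume "\<exists>f :: 4 poly. f^2 = mod4 Q"
  then obtain f :: "4 poly" where f: "f^2 = mod4 Q" by blast
  show "\<exists>F :: 4 poly. (\<forall>n. odd n \<longrightarrow> coeff F n = 0) \<and> F ^ 2 = mod4 (pcompose Q [:0,0,1:])"
    by (intro exI[of _ "pcompose f [:0,0,1:]"]) (simp add: coeff_pcomp_x2 mod4_x2 f[symmetric] pcompose_power)
qed

lemma per_C:
  assumes ct: "conway_type C"
  shows "(\<exists>F :: 4 poly. (\<forall>n. odd n \<longrightarrow> coeff F n = 0) \<and>
               F ^ 2 = mod4 (C * conway_sq C * conway_iz C))
     \<longleftrightarrow> (\<forall>i\<ge>1. even (pc C (4 * i)))"
proof -
  have c0: "coeff (conway_x C) 0 = 1" using ct by (simp add: coeff_conway_x conway_type_def)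
  have pc: "pc C (4 * i) = logZ (conway_x C) (2 * i)" for i unfolding pc_def by simp
  show ?thesis
    unfolding prod_eq[OF ct] even_sq_iff sq4_iff pc
    using core_A_B[OF c0] core_B_A[OF c0] by blast
qed

theorem mainTheorem5:
  fixes amphicheiral :: "'k \<Rightarrow> bool"
    and conway :: "'k \<Rightarrow> int poly"
  assumes "\<forall>K. conway_type (conway K)"
  shows "(\<forall>K. amphicheiral K \<longrightarrow>
            (\<exists>F :: 4 poly. (\<forall>n. odd n \<longrightarrow> coeff F n = 0) \<and>
               F ^ 2 = mod4 (conway K * conway_sq (conway K) * conway_iz (conway K))))
     \<longleftrightarrow>
     (\<forall>K. amphicheiral K \<longrightarrow> (\<forall>i\<ge>1. even (pc (conway K) (4 * i))))"
  using per_C assms by blast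

end
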